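(* Let $L$ be a right pre-Lie algebra over $k$ with product $\curvearrowleft$, and let $l,l_1,\ldots,l_n\in L$. Then the symmetric brace $\{l;l_1\cdots l_n\}:=l\curvearrowleft(l_1\cdots l_n)$ satisfies $$ \{l;l_1\cdots l_n\}=\sum_{\{P_1,\ldots,P_k\}}(-1)^{n-k}\Big(\cdots\big((l\curvearrowleft l_{P_1})\curvearrowleft l_{P_2}\big)\cdots\curvearrowleft l_{P_k}\Big), $$ where the sum runs over all set partitions $\{P_1,\ldots,P_k\}$ of $\{1,\ldots,n\}$ with blocks indexed so that $\max P_1<\cdots<\max P_k$, and for a block $P_i=\{p_1<\cdots<p_h\}$, $l_{P_i}:=\sum_{\sigma\in S_{h-1}} l_{p_{\sigma(1)}}\curvearrowleft\big(l_{p_{\sigma(2)}}\curvearrowleft(\cdots\curvearrowleft(l_{p_{\sigma(h-1)}}\curvearrowleft l_{p_h})\cdots)\big)$ (for $h=1$, $l_{P_i}=l_{p_1}$).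
   Context: $k$ is a field of characteristic zero. A right pre-Lie algebra is a vector space $L$ with bilinear product $\curvearrowleft$ satisfying $(x\curvearrowleft y)\curvearrowleft z-x\curvearrowleft(y\curvearrowleft z)=(x\curvearrowleft z)\curvearrowleft y-x\curvearrowleft(z\curvearrowleft y)$. The action of the symmetric algebra $S(L)$ (commutative product written as juxtaposition) on $L$ is defined recursively by $l\curvearrowleft 1=l$ and, for $l,l_1,\ldots,l_n\in L$, $l\curvearrowleft(l_1\cdots l_n)=(l\curvearrowleft(l_1\cdots l_{n-1}))\curvearrowleft l_n-\sum_{i=1}^{n-1}l\curvearrowleft(l_1\cdots l_{i-1}(l_i\curvearrowleft l_n)l_{i+1}\cdots l_{n-1})$. *)

theory Defs
  imports Main "HOL.Vector_Spaces" "HOL-Combinatorics.Permutations" "HOL-Library.Disjoint_Sets"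
begin

definition right_pre_Lie ::
  "('k::field \<Rightarrow> 'v::ab_group_add \<Rightarrow> 'v) \<Rightarrow> ('v \<Rightarrow> 'v \<Rightarrow> 'v) \<Rightarrow> bool" where
  "right_pre_Lie scale rp \<longleftrightarrow>
     vector_space scale \<and>
     (\<forall>x y z. rp (x + y) z = rp x z + rp y z) \<and>
     (\<forall>x y z. rp x (y + z) = rp x y + rp x z) \<and>
     (\<forall>c x y. rp (scale c x) y = scale c (rp x y)) \<and>
     (\<forall>c x y. rp x (scale c y) = scale c (rp x y)) \<and>
     (\<forall>x y z. rp (rp x y) z - rp x (rp y z) = rp (rp x z) y - rp x (rp z y))"

text \<open>Symmetric brace l \<curvearrowleft> (l_1 \<cdots> l_n), with the monomial l_1 \<cdots> l_n given by
  f 1, ..., f n; defined by the recursion of the paper (recursion on n).\<close>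

fun sbrace :: "('v::ab_group_add \<Rightarrow> 'v \<Rightarrow> 'v) \<Rightarrow> 'v \<Rightarrow> (nat \<Rightarrow> 'v) \<Rightarrow> nat \<Rightarrow> 'v" where
  "sbrace rp l f 0 = l"
| "sbrace rp l f (Suc n) =
     rp (sbrace rp l f n) (f (Suc n))
     - (\<Sum>i\<in>{1..n}. sbrace rp l (f(i := rp (f i) (f (Suc n)))) n)"

definition block_elt :: "('v::ab_group_add \<Rightarrow> 'v \<Rightarrow> 'v) \<Rightarrow> (nat \<Rightarrow> 'v) \<Rightarrow> nat set \<Rightarrow> 'v" where
  "block_elt rp f P =
     (let ps = sorted_list_of_set P; h = length ps in
      \<Sum>\<sigma> \<in> {\<sigma>. \<sigma> permutes {1..h-1}}.
        foldr (\<lambda>i acc. rp (f (ps ! (\<sigma> i - 1))) acc) [1..<h] (f (ps ! (h - 1))))"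

definition partition_term ::
  "('v::ab_group_add \<Rightarrow> 'v \<Rightarrow> 'v) \<Rightarrow> 'v \<Rightarrow> (nat \<Rightarrow> 'v) \<Rightarrow> nat set set \<Rightarrow> 'v" where
  "partition_term rp l f \<P> =
     foldl (\<lambda>acc P. rp acc (block_elt rp f P)) l (sorted_key_list_of_set Max \<P>)"

end

theory Submission imports Defs "HOL-Combinatorics.Multiset_Permutations" begin

locale prel =
  fixes R :: "'v::ab_group_add \<Rightarrow> 'v \<Rightarrow> 'v"
  assumes addL: "R (x + y) z = R x z + R y z"
      and addR: "R x (y + z) = R x y + R x z"
      and preLie: "R (R x y) z - R x (R y z) = R (R x z) y - R x (R z y)"
begin

lemma sbrace_cong: "(\<And>i. 1 \<le> i \<Longrightarrow> i \<le> n \<Longrightarrow> f i = g i) \<Longrightarrow> sbrace R l f n = sbrace R l g n"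
proof (induction n arbitrary: f g)
  case 0 then show ?case by simp
next
  case (Suc n)
  have a: "sbrace R l f n = sbrace R l g n" by (rule Suc.IH) (simp add: Suc.prems)
  have b: "sbrace R l (f(i := R (f i) (f (Suc n)))) n = sbrace R l (g(i := R (g i) (g (Suc n)))) n"
    if "i \<in> {1..n}" for i
  proof (rule Suc.IH)
    fix j assume "1 \<le> j" "j \<le> n"
    then show "(f(i := R (f i) (f (Suc n)))) j = (g(i := R (g i) (g (Suc n)))) j"
      using Suc.prems[of j] Suc.prems[of i] Suc.prems[of "Suc n"] that by auto
  qed
  have c: "(\<Sum>i\<in>{1..n}. sbrace R l (f(i := R (f i) (f (Suc n)))) n) = (\<Sum>i\<in>{1..n}. sbrace R l (g(i := R (g i) (g (Suc n)))) n)"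
    by (rule sum.cong[OF refl b])
  show ?case unfolding sbrace.simps a c using Suc.prems[of "Suc n"] by simp
qed

definition br :: "'v \<Rightarrow> 'v list \<Rightarrow> 'v" where
  "br l xs = sbrace R l (\<lambda>i. xs ! (i - 1)) (length xs)"

lemma br_Nil[simp]: "br l [] = l" by (simp add: br_def)

lemma br_snoc: "br l (xs @ [y]) = R (br l xs) y - (\<Sum>j<length xs. br l (xs[j := R (xs!j) y]))"
proof -
  let ?n = "length xs"
  let ?g = "\<lambda>i. (xs @ [y]) ! (i - 1)"
  have "br l (xs @ [y]) = sbrace R l ?g (Suc ?n)" by (simp add: br_def)
  also have "\<dots> = R (sbrace R l ?g ?n) y - (\<Sum>i\<in>{1..?n}. sbrace R l (?g(i := R (?g i) y)) ?n)"
    by (simp add: nth_append)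
  also have "sbrace R l ?g ?n = br l xs" unfolding br_def
    by (rule sbrace_cong) (auto simp: nth_append)
  also have "(\<Sum>i\<in>{1..?n}. sbrace R l (?g(i := R (?g i) y)) ?n) = (\<Sum>j<?n. sbrace R l (?g(Suc j := R (?g (Suc j)) y)) ?n)"
    by (rule sum.reindex_bij_witness[where i=Suc and j="\<lambda>i. i - 1"]) auto
  also have "\<dots> = (\<Sum>j<length xs. br l (xs[j := R (xs!j) y]))"
    unfolding br_def length_list_update by (rule sum.cong[OF refl], rule sbrace_cong) (auto simp: nth_append nth_list_update)
  finally show ?thesis .
qed

lemma R0L[simp]: "R 0 z = 0" using addL[of 0 0 z] by simp
lemma R0R[simp]: "R x 0 = 0" using addR[of x 0 0] by simp
lemma RnegL: "R (- x) z = - R x z" using addL[of x "-x" z] minus_unique[of "R x z" "R (-x) z"] by simp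
lemma RnegR: "R x (- z) = - R x z" using addR[of x z "-z"] minus_unique[of "R x z" "R x (-z)"] by simp
lemma RdiffL: "R (x - y) z = R x z - R y z" using addL[of x "-y" z] RnegL by simp
lemma RdiffR: "R x (y - z) = R x y - R x z" using addR[of x y "-z"] RnegR by simp
lemma RsumL: "R (\<Sum>i\<in>A. g i) z = (\<Sum>i\<in>A. R (g i) z)"
  by (induction A rule: infinite_finite_induct) (auto simp: addL)
lemma RsumR: "R x (\<Sum>i\<in>A. g i) = (\<Sum>i\<in>A. R x (g i))"
  by (induction A rule: infinite_finite_induct) (auto simp: addR)

lemma length_induct_snoc:
  assumes "P []" "\<And>xs y. (\<And>ys. length ys = length xs \<Longrightarrow> P ys) \<Longrightarrow> P (xs @ [y])"
  shows "P xs"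
proof (induction "length xs" arbitrary: xs)
  case 0 then show ?case using assms(1) by simp
next
  case (Suc n)
  then obtain ys y where "xs = ys @ [y]" by (metis length_0_conv nat.distinct(1) rev_exhaust)
  then show ?case using Suc by (auto intro: assms(2))
qed

lemma br_addl: "br (a + b) xs = br a xs + br b xs"
proof (induction xs arbitrary: a b rule: length_induct_snoc)
  case 1 then show ?case by simp
next
  case (2 xs y)
  have "(\<Sum>j<length xs. br (a+b) (xs[j := R (xs!j) y])) =
     (\<Sum>j<length xs. br a (xs[j := R (xs!j) y])) + (\<Sum>j<length xs. br b (xs[j := R (xs!j) y]))"
    by (simp add: 2 sum.distrib)
  then show ?case by (simp add: br_snoc 2 addL)
qed

lemma br_zerol[simp]: "br 0 xs = 0" using br_addl[of 0 0 xs] by simp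
lemma br_negl: "br (- a) xs = - br a xs"
  using br_addl[of a "-a" xs] minus_unique[of "br a xs" "br (-a) xs"] by simp
lemma br_diffl: "br (a - b) xs = br a xs - br b xs" using br_addl[of a "-b"] br_negl by simp
lemma br_suml: "br (\<Sum>i\<in>A. g i) xs = (\<Sum>i\<in>A. br (g i) xs)"
  by (induction A rule: infinite_finite_induct) (auto simp: br_addl)

lemma br_add_entry:
  "i < length xs \<Longrightarrow> br l (xs[i := p + q]) = br l (xs[i := p]) + br l (xs[i := q])"
proof (induction xs arbitrary: i p q rule: length_induct_snoc)
  case 1 then show ?case by simp
next
  case (2 xs y)
  show ?case
  proof (cases "i < length xs")
    case True
    have t: "br l (xs[i := u, j := R (xs[i := u] ! j) y]) =
          (if j = i then br l (xs[i := R u y]) else br l ((xs[j := R (xs!j) y])[i := u]))"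
      if "j < length xs" for j u
      using that True by (auto simp: list_update_swap)
    have "(\<Sum>j<length xs. br l (xs[i := p+q, j := R (xs[i := p+q] ! j) y])) =
      (\<Sum>j<length xs. br l (xs[i := p, j := R (xs[i := p] ! j) y])) +
      (\<Sum>j<length xs. br l (xs[i := q, j := R (xs[i := q] ! j) y]))"
      unfolding sum.distrib[symmetric]
      by (rule sum.cong[OF refl]) (simp add: t 2 addL True)
    then show ?thesis using True 2
      by (simp add: list_update_append br_snoc addL)
  next
    case False
    then have i: "i = length xs" using 2 by simp
    have "(\<Sum>j<length xs. br l (xs[j := R (xs!j) (p+q)])) =
      (\<Sum>j<length xs. br l (xs[j := R (xs!j) p])) + (\<Sum>j<length xs. br l (xs[j := R (xs!j) q]))"
      unfolding sum.distrib[symmetric]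
      by (rule sum.cong[OF refl]) (simp add: 2 addR)
    then show ?thesis using i by (simp add: br_snoc addR)
  qed
qed

lemma br_swap_last: "br l (zs @ [a, b]) = br l (zs @ [b, a])"
proof -
  define n where "n = length zs"
  define X where "X = br l zs"
  define P where "P a b = (\<Sum>k<n. R (br l (zs[k := R (zs!k) a])) b)" for a b
  define M where "M a b = (\<Sum>j<n. \<Sum>k\<in>{k. k \<in> {..<n} \<and> j \<noteq> k}. br l (zs[j := R (zs!j) b, k := R (zs!k) a]))" for a b
  define Dg where "Dg a b = (\<Sum>j<n. br l (zs[j := R (R (zs!j) b) a + R (zs!j) (R a b)]))" for a b
  have E: "br l (zs @ [a, b]) = R (R X a) b - R X (R a b) - (P a b + P b a) + Dg a b + M a b" for a b
  proof -
    have s1: "br l (zs @ [a, b]) = R (br l (zs @ [a])) b - ((\<Sum>j<n. br l (zs[j := R (zs!j) b] @ [a])) + br l (zs @ [R a b]))"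
      using br_snoc[of l "zs @ [a]" b] by (simp add: n_def nth_append list_update_append)
    have s2: "R (br l (zs @ [a])) b = R (R X a) b - P a b"
      by (simp add: br_snoc X_def P_def n_def RdiffL RsumL)
    have s3: "br l (zs @ [R a b]) = R X (R a b) - (\<Sum>j<n. br l (zs[j := R (zs!j) (R a b)]))"
      by (simp add: br_snoc X_def n_def)
    have s4: "br l (zs[j := R (zs!j) b] @ [a]) = R (br l (zs[j := R (zs!j) b])) a -
       (br l (zs[j := R (R (zs!j) b) a]) + (\<Sum>k\<in>{k. k \<in> {..<n} \<and> j \<noteq> k}. br l (zs[j := R (zs!j) b, k := R (zs!k) a])))"
      if "j < n" for j
    proof -
      have "(\<Sum>k<n. br l (zs[j := R (zs!j) b, k := R (zs[j := R (zs!j) b] ! k) a])) =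
         br l (zs[j := R (zs!j) b, j := R (zs[j := R (zs!j) b] ! j) a]) +
         (\<Sum>k\<in>{..<n} - {j}. br l (zs[j := R (zs!j) b, k := R (zs[j := R (zs!j) b] ! k) a]))"
        by (rule sum.remove) (use that in auto)
      also have "{..<n} - {j} = {k. k \<in> {..<n} \<and> j \<noteq> k}" by auto
      finally show ?thesis using that by (simp add: br_snoc n_def)
    qed
    have s5: "(\<Sum>j<n. br l (zs[j := R (zs!j) b] @ [a])) = P b a -
       ((\<Sum>j<n. br l (zs[j := R (R (zs!j) b) a])) + M a b)"
      by (simp add: s4 P_def M_def sum_subtractf sum.distrib)
    have s6: "Dg a b = (\<Sum>j<n. br l (zs[j := R (R (zs!j) b) a])) + (\<Sum>j<n. br l (zs[j := R (zs!j) (R a b)]))"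
      unfolding Dg_def sum.distrib[symmetric] by (rule sum.cong) (auto simp: br_add_entry n_def)
    show ?thesis unfolding s1 s2 s3 s5 s6 by (simp add: algebra_simps)
  qed
  have M: "M a b = M b a"
    unfolding M_def
    by (subst sum.swap_restrict) (auto simp: list_update_swap intro!: sum.cong)
  have Dg: "Dg a b = Dg b a"
  proof -
    have "R (R x b) a + R x (R a b) = R (R x a) b + R x (R b a)" for x
      using preLie[of x a b] by (simp add: algebra_simps)
    then show ?thesis unfolding Dg_def by simp
  qed
  have T: "R (R X a) b - R X (R a b) = R (R X b) a - R X (R b a)" by (rule preLie)
  show ?thesis unfolding E[of a b] E[of b a] M Dg T by (simp add: algebra_simps)
qed

lemma br_sym_step:
  assumes IH: "\<And>us vs. length us = length xs' \<Longrightarrow> mset us = mset vs \<Longrightarrow> br l us = br l vs"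
    and eq: "mset xs' = mset ys'"
  shows "br l (xs' @ [a]) = br l (ys' @ [a])"
proof -
  have len: "length xs' = length ys'" using eq by (metis size_mset)
  obtain p where p: "p permutes {..<length ys'}" "permute_list p ys' = xs'"
    using mset_eq_permutation[OF eq] by blast
  have nth: "xs' ! j = ys' ! p j" if "j < length ys'" for j
    using permute_list_nth[OF p(1) that] p(2) by simp
  have pj: "p j < length ys'" if "j < length ys'" for j using permutes_in_image[OF p(1)] that by auto
  have "(\<Sum>j<length xs'. br l (xs'[j := R (xs'!j) a])) = (\<Sum>j<length ys'. br l (ys'[p j := R (ys'!(p j)) a]))"
  proof (rule sum.cong)
    fix j assume j: "j \<in> {..<length ys'}"
    have "mset (xs'[j := R (xs'!j) a]) = mset (ys'[p j := R (ys'!(p j)) a])"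
      using j len pj[of j] nth[of j] eq by (simp add: mset_update)
    then show "br l (xs'[j := R (xs'!j) a]) = br l (ys'[p j := R (ys'!(p j)) a])"
      by (rule IH[rotated]) simp
  qed (simp add: len)
  also have "\<dots> = (\<Sum>j\<in>p ` {..<length ys'}. br l (ys'[j := R (ys'!j) a]))"
    by (simp add: sum.reindex[OF permutes_inj_on[OF p(1)]])
  also have "\<dots> = (\<Sum>j<length ys'. br l (ys'[j := R (ys'!j) a]))"
    by (simp add: permutes_image[OF p(1)])
  finally show ?thesis using IH[OF refl eq] by (simp add: br_snoc)
qed

lemma br_sym: "mset xs = mset ys \<Longrightarrow> br l xs = br l ys"
proof (induction xs arbitrary: ys rule: length_induct_snoc)
  case 1 then show ?case by simp
next
  case (2 xs a)
  have IH: "\<And>us vs. length us = length xs \<Longrightarrow> mset us = mset vs \<Longrightarrow> br l us = br l vs"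
    using 2 by blast
  obtain ys' b where ys: "ys = ys' @ [b]" using 2(2)
    by (metis mset.simps(1) mset_zero_iff rev_exhaust snoc_eq_iff_butlast add_mset_not_empty mset_append union_commute)
  show ?case
  proof (cases "a = b")
    case True
    then have "mset xs = mset ys'" using 2(2) ys by simp
    then show ?thesis using br_sym_step[OF IH] ys True by blast
  next
    case False
    have "b \<in> set xs" using 2(2) ys False
      by (metis in_multiset_in_set insert_iff list.simps(15) mset_eq_setD set_append sup.commute Un_iff empty_iff set_empty2)
    define zs where "zs = remove1 b xs"
    have m1: "mset xs = mset (zs @ [b])" using \<open>b \<in> set xs\<close> by (simp add: zs_def)
    have m2: "mset (zs @ [a]) = mset ys'"
      using 2(2) ys m1 by (simp add: add_mset_commute)
    have "br l (xs @ [a]) = br l ((zs @ [b]) @ [a])" by (rule br_sym_step[OF IH m1])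
    also have "\<dots> = br l ((zs @ [a]) @ [b])" using br_swap_last[of l zs b a] by simp
    also have "\<dots> = br l (ys' @ [b])"
    proof (rule br_sym_step[OF _ m2])
      show "\<And>us vs. length us = length (zs @ [a]) \<Longrightarrow> mset us = mset vs \<Longrightarrow> br l us = br l vs"
        using IH m1 by (metis size_mset length_append_singleton)
    qed
    finally show ?thesis using ys by simp
  qed
qed

definition sg :: "nat \<Rightarrow> 'v \<Rightarrow> 'v" where "sg k x = (if even k then x else - x)"

lemma sg_0[simp]: "sg 0 x = x" by (simp add: sg_def)
lemma sg_Suc: "sg (Suc k) x = - sg k x" by (simp add: sg_def)
lemma sg_add: "sg (a + b) x = sg a (sg b x)" by (simp add: sg_def)
lemma sg_plus: "sg k (x + y) = sg k x + sg k y" by (simp add: sg_def)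
lemma sg_sum: "sg k (\<Sum>i\<in>A. g i) = (\<Sum>i\<in>A. sg k (g i))" by (simp add: sg_def sum_negf)
lemma R_sgL: "R (sg k x) y = sg k (R x y)" by (simp add: sg_def RnegL)
lemma R_sgR: "R x (sg k y) = sg k (R x y)" by (simp add: sg_def RnegR)

definition brS :: "'v \<Rightarrow> (nat \<Rightarrow> 'v) \<Rightarrow> nat set \<Rightarrow> 'v" where
  "brS l f S = br l (map f (sorted_list_of_set S))"

definition W :: "(nat \<Rightarrow> 'v) \<Rightarrow> nat set \<Rightarrow> 'v \<Rightarrow> 'v" where
  "W f C z = (\<Sum>ws\<in>permutations_of_set C. foldr (\<lambda>i acc. R (f i) acc) ws z)"

lemma W_empty[simp]: "W f {} z = z" by (simp add: W_def)

lemma sum_perms_rev: "(\<Sum>ws\<in>permutations_of_set A. F ws) = (\<Sum>ws\<in>permutations_of_set A. F (rev ws))"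
proof -
  have "(\<Sum>ws\<in>permutations_of_set A. F ws) = (\<Sum>ws\<in>rev ` permutations_of_set A. F ws)" by simp
  also have "\<dots> = (\<Sum>ws\<in>permutations_of_set A. F (rev ws))"
    by (subst sum.reindex) (auto intro: inj_onI)
  finally show ?thesis .
qed

lemma W_last:
  assumes "finite D" "D \<noteq> {}"
  shows "W f D z = (\<Sum>i\<in>D. W f (D - {i}) (R (f i) z))"
proof -
  let ?g = "\<lambda>i acc. R (f i) acc"
  have "W f D z = (\<Sum>ws\<in>permutations_of_set D. foldr ?g (rev ws) z)"
    unfolding W_def by (rule sum_perms_rev)
  also have "\<dots> = (\<Sum>ws\<in>(\<Union>x\<in>D. (\<lambda>xs. x # xs) ` permutations_of_set (D - {x})). foldr ?g (rev ws) z)"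
    using permutations_of_set_nonempty[OF assms(2)] by simp
  also have "\<dots> = (\<Sum>x\<in>D. \<Sum>ws\<in>(\<lambda>xs. x # xs) ` permutations_of_set (D - {x}). foldr ?g (rev ws) z)"
    by (rule sum.UNION_disjoint) (use assms in auto)
  also have "\<dots> = (\<Sum>x\<in>D. \<Sum>ws\<in>permutations_of_set (D - {x}). foldr ?g (rev ws) (R (f x) z))"
    by (rule sum.cong[OF refl], subst sum.reindex) (auto intro: inj_onI)
  also have "\<dots> = (\<Sum>i\<in>D. W f (D - {i}) (R (f i) z))"
    unfolding W_def by (rule sum.cong[OF refl], rule sum_perms_rev[symmetric])
  finally show ?thesis .
qed

lemma mset_sorted: "mset (sorted_list_of_set S) = mset_set S"
  by (metis mset_sorted_list_of_multiset sorted_list_of_mset_set)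

lemma sum_nth_sorted:
  assumes "finite S"
  shows "(\<Sum>j<card S. h (sorted_list_of_set S ! j)) = (\<Sum>i\<in>S. h i)"
proof -
  let ?ss = "sorted_list_of_set S"
  have "(\<Sum>j<card S. h (?ss ! j)) = sum_list (map h ?ss)"
    by (simp add: sum_list_sum_nth atLeast0LessThan assms)
  also have "\<dots> = (\<Sum>i\<in>S. h i)"
    by (simp add: sum_list_distinct_conv_sum_set assms)
  finally show ?thesis .
qed

lemma brS_snoc_sym:
  assumes "finite S" "i \<in> S" and that: "j < card S" "sorted_list_of_set S ! j = i"
  shows "br l ((map f (sorted_list_of_set S))[j := v]) = br l (map f (sorted_list_of_set (S - {i})) @ [v])"
proof (rule br_sym)
  have "mset (map f (sorted_list_of_set S)) = add_mset (f i) (image_mset f (mset_set (S - {i})))"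
    using assms by (simp add: mset_sorted mset_set.remove)
  then show "mset ((map f (sorted_list_of_set S))[j := v]) = mset (map f (sorted_list_of_set (S - {i})) @ [v])"
    using that assms by (simp add: mset_update mset_sorted)
qed

lemma G:
  assumes "finite S"
  shows "br l (map f (sorted_list_of_set S) @ [z]) =
    (\<Sum>C\<in>Pow S. sg (card C) (R (brS l f (S - C)) (W f C z)))"
  using assms
proof (induction "card S" arbitrary: S z rule: less_induct)
  case less
  let ?ss = "sorted_list_of_set S"
  let ?xs = "map f ?ss"
  define G where "G i C = sg (card C) (R (brS l f (S - {i} - C)) (W f C (R (f i) z)))" for i C
  have step: "br l (?xs[j := R (?xs ! j) z]) = (\<Sum>C\<in>Pow (S - {?ss ! j}). G (?ss ! j) C)"
    if j: "j < card S" for j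
  proof -
    have i: "?ss ! j \<in> S" using j less.prems
      by (metis length_sorted_list_of_set nth_mem set_sorted_list_of_set)
    have "br l (?xs[j := R (?xs ! j) z]) = br l (map f (sorted_list_of_set (S - {?ss ! j})) @ [R (f (?ss ! j)) z])"
      using brS_snoc_sym[OF less.prems i j refl] j by simp
    also have "\<dots> = (\<Sum>C\<in>Pow (S - {?ss ! j}). G (?ss ! j) C)"
      unfolding G_def
    proof (rule less.hyps)
      have "card S > 0" using i less.prems card_gt_0_iff by blast
      then show "card (S - {?ss ! j}) < card S" using i less.prems by simp
    qed (use less.prems in auto)
    finally show ?thesis .
  qed
  have "(\<Sum>j<length ?xs. br l (?xs[j := R (?xs ! j) z])) = (\<Sum>j<card S. (\<lambda>i. \<Sum>C\<in>Pow (S - {i}). G i C) (?ss ! j))"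
    using step less.prems by simp
  also have "\<dots> = (\<Sum>i\<in>S. \<Sum>C\<in>Pow (S - {i}). G i C)"
    by (rule sum_nth_sorted[OF less.prems])
  also have "\<dots> = (\<Sum>i\<in>S. \<Sum>D\<in>{D\<in>Pow S. i \<in> D}. G i (D - {i}))"
  proof (rule sum.cong[OF refl])
    fix i assume "i \<in> S"
    show "(\<Sum>C\<in>Pow (S - {i}). G i C) = (\<Sum>D\<in>{D\<in>Pow S. i \<in> D}. G i (D - {i}))"
    proof -
      have aux: "\<And>a. a \<subseteq> S - {i} \<Longrightarrow> a - {i} = a" by blast
      show ?thesis
        by (rule sum.reindex_bij_witness[where i="\<lambda>D. D - {i}" and j="insert i"]) (use \<open>i \<in> S\<close> aux in auto)
    qed
  qed
  also have "\<dots> = (\<Sum>D\<in>Pow S. \<Sum>i\<in>{i\<in>S. i \<in> D}. G i (D - {i}))"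
    by (rule sum.swap_restrict) (use less.prems in auto)
  also have "\<dots> = (\<Sum>D\<in>Pow S. (if D = {} then 0 else sg (card D - 1) (R (brS l f (S - D)) (W f D z))))"
  proof (rule sum.cong[OF refl])
    fix D assume D: "D \<in> Pow S"
    then have fD: "finite D" using less.prems finite_subset by auto
    have e: "{i\<in>S. i \<in> D} = D" using D by auto
    show "(\<Sum>i\<in>{i\<in>S. i \<in> D}. G i (D - {i})) = (if D = {} then 0 else sg (card D - 1) (R (brS l f (S - D)) (W f D z)))"
    proof (cases "D = {}")
      case False
      have "(\<Sum>i\<in>D. G i (D - {i})) = (\<Sum>i\<in>D. sg (card D - 1) (R (brS l f (S - D)) (W f (D - {i}) (R (f i) z))))"
      proof (rule sum.cong[OF refl])
        fix i assume "i \<in> D"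
        then have "S - {i} - (D - {i}) = S - D" "card (D - {i}) = card D - 1" using fD by auto
        then show "G i (D - {i}) = sg (card D - 1) (R (brS l f (S - D)) (W f (D - {i}) (R (f i) z)))"
          by (simp add: G_def)
      qed
      also have "\<dots> = sg (card D - 1) (R (brS l f (S - D)) (W f D z))"
        by (simp add: W_last[OF fD False] RsumR sg_sum)
      finally show ?thesis using False e by simp
    qed simp
  qed
  finally have sumeq: "(\<Sum>j<length ?xs. br l (?xs[j := R (?xs ! j) z])) =
      (\<Sum>D\<in>Pow S. (if D = {} then 0 else sg (card D - 1) (R (brS l f (S - D)) (W f D z))))" .
  have "(\<Sum>C\<in>Pow S. sg (card C) (R (brS l f (S - C)) (W f C z))) =
     sg (card {}) (R (brS l f (S - {})) (W f {} z)) + (\<Sum>C\<in>Pow S - {{}}. sg (card C) (R (brS l f (S - C)) (W f C z)))"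
    using sum.remove[of "Pow S" "{}" "\<lambda>C. sg (card C) (R (brS l f (S - C)) (W f C z))"] less.prems by simp
  also have "(\<Sum>C\<in>Pow S - {{}}. sg (card C) (R (brS l f (S - C)) (W f C z))) =
      - (\<Sum>D\<in>Pow S. (if D = {} then 0 else sg (card D - 1) (R (brS l f (S - D)) (W f D z))))"
  proof -
    have "(\<Sum>D\<in>Pow S. (if D = {} then 0 else sg (card D - 1) (R (brS l f (S - D)) (W f D z)))) =
       (\<Sum>D\<in>Pow S - {{}}. (if D = {} then 0 else sg (card D - 1) (R (brS l f (S - D)) (W f D z))))"
      by (rule sum.mono_neutral_right) (use less.prems in auto)
    also have "\<dots> = (\<Sum>D\<in>Pow S - {{}}. - sg (card D) (R (brS l f (S - D)) (W f D z)))"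
    proof (rule sum.cong[OF refl])
      fix D assume D: "D \<in> Pow S - {{}}"
      then have "card D = Suc (card D - 1)" using less.prems
        by (metis DiffE PowD card_0_eq finite_subset insertI1 Suc_pred' not_gr_zero)
      then show "(if D = {} then 0 else sg (card D - 1) (R (brS l f (S - D)) (W f D z))) =
         - sg (card D) (R (brS l f (S - D)) (W f D z))" using D
        by (metis DiffD2 insertI1 minus_minus sg_Suc)
    qed
    finally show ?thesis by (simp add: sum_negf)
  qed
  finally show ?case using sumeq by (simp add: br_snoc brS_def)
qed

end

lemma perm_sum:
  assumes d: "distinct cs" and k: "length cs = k"
  shows "(\<Sum>\<sigma>\<in>{\<sigma>. \<sigma> permutes {1..k}}. F (map (\<lambda>i. cs ! (\<sigma> i - 1)) [1..<k+1])) =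
         (\<Sum>ws\<in>permutations_of_set (set cs). F ws)"
proof -
  define e where "e i = cs ! (i - 1)" for i
  define e' where "e' = the_inv_into {1..k} e"
  have inj: "inj_on e {1..k}" unfolding e_def inj_on_def using d k
    by (auto simp: nth_eq_iff_index_eq)
  have img: "e ` {1..k} = set cs"
  proof
    show "e ` {1..k} \<subseteq> set cs" using k by (auto simp: e_def)
    show "set cs \<subseteq> e ` {1..k}"
    proof
      fix c assume "c \<in> set cs"
      then obtain i where "i < length cs" "cs ! i = c" by (auto simp: in_set_conv_nth)
      then show "c \<in> e ` {1..k}" using k by (auto simp: e_def image_def intro!: bexI[of _ "Suc i"])
    qed
  qed
  have bij: "bij_betw e {1..k} (set cs)" using inj img by (simp add: bij_betw_def)
  have e'e: "e' (e i) = i" if "i \<in> {1..k}" for i using the_inv_into_f_f[OF inj that] by (simp add: e'_def)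
  have ee': "e (e' c) = c" if "c \<in> set cs" for c using f_the_inv_into_f[OF inj] that img by (simp add: e'_def)
  have e'in: "e' c \<in> {1..k}" if "c \<in> set cs" for c using the_inv_into_into[OF inj, of c "{1..k}"] that img by (simp add: e'_def)
  define \<Phi> where "\<Phi> \<sigma> = map (\<lambda>i. e (\<sigma> i)) [1..<k+1]" for \<sigma> :: "nat \<Rightarrow> nat"
  define \<Psi> where "\<Psi> ws = (\<lambda>j. if j \<in> {1..k} then e' (ws ! (j - 1)) else j)" for ws
  have nthPhi: "\<Phi> \<sigma> ! (j - 1) = e (\<sigma> j)" if "j \<in> {1..k}" for \<sigma> j
    using that unfolding \<Phi>_def by (subst nth_map) (auto simp del: upt_Suc)
  have "(\<Sum>\<sigma>\<in>{\<sigma>. \<sigma> permutes {1..k}}. F (\<Phi> \<sigma>)) = (\<Sum>ws\<in>permutations_of_set (set cs). F ws)"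
  proof (rule sum.reindex_bij_witness[where i=\<Psi> and j=\<Phi>])
    fix \<sigma> assume "\<sigma> \<in> {\<sigma>. \<sigma> permutes {1..k}}"
    then have p: "\<sigma> permutes {1..k}" by simp
    show "\<Psi> (\<Phi> \<sigma>) = \<sigma>"
    proof
      fix j show "\<Psi> (\<Phi> \<sigma>) j = \<sigma> j"
      proof (cases "j \<in> {1..k}")
        case True
        then have "\<sigma> j \<in> {1..k}" using permutes_in_image[OF p] by simp
        then show ?thesis using True nthPhi[OF True] e'e[of "\<sigma> j"] by (simp add: \<Psi>_def)
      next
        case False
        then show ?thesis using permutes_not_in[OF p False] unfolding \<Psi>_def by (simp only: if_False)
      qed
    qed
    have "inj_on (\<lambda>i. e (\<sigma> i)) {1..k}"
      using comp_inj_on[of \<sigma> "{1..k}" e] permutes_inj_on[OF p] permutes_image[OF p] inj by (simp add: o_def)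
    moreover have "(\<lambda>i. e (\<sigma> i)) ` {1..k} = e ` (\<sigma> ` {1..k})" by (simp add: image_image)
    then have "(\<lambda>i. e (\<sigma> i)) ` {1..k} = set cs" using img permutes_image[OF p] by simp
    ultimately show "\<Phi> \<sigma> \<in> permutations_of_set (set cs)"
      unfolding \<Phi>_def permutations_of_set_def
      by (auto simp: distinct_map atLeastLessThanSuc_atLeastAtMost simp del: upt_Suc)
  next
    fix ws assume ws: "ws \<in> permutations_of_set (set cs)"
    then have len: "length ws = k" using length_finite_permutations_of_set[OF ws] distinct_card[OF d] k by simp
    have setws: "set ws = set cs" "distinct ws" using ws by (auto simp: permutations_of_set_def)
    have wsin: "ws ! (j - 1) \<in> set cs" if "j \<in> {1..k}" for j
    proof -
      have "j - 1 < length ws" using that len by auto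
      then show ?thesis using setws(1) nth_mem[of "j - 1" ws] by simp
    qed
    show "\<Phi> (\<Psi> ws) = ws"
    proof (rule nth_equalityI)
      show "length (\<Phi> (\<Psi> ws)) = length ws" using len by (simp add: \<Phi>_def del: upt_Suc)
      fix j assume "j < length (\<Phi> (\<Psi> ws))"
      then have j: "j < k" by (simp add: \<Phi>_def del: upt_Suc)
      then have "\<Phi> (\<Psi> ws) ! j = e (\<Psi> ws (Suc j))" by (simp add: \<Phi>_def del: upt_Suc)
      also have "\<dots> = ws ! j" using j wsin[of "Suc j"] ee' by (simp add: \<Psi>_def)
      finally show "\<Phi> (\<Psi> ws) ! j = ws ! j" .
    qed
    show "\<Psi> ws \<in> {\<sigma>. \<sigma> permutes {1..k}}"
    proof (rule CollectI, rule bij_imp_permutes)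
      have "inj_on (\<Psi> ws) {1..k}"
      proof (rule inj_onI)
        fix x y assume xy: "x \<in> {1..k}" "y \<in> {1..k}" "\<Psi> ws x = \<Psi> ws y"
        then have "e (e' (ws ! (x - 1))) = e (e' (ws ! (y - 1)))" by (simp add: \<Psi>_def)
        then have "ws ! (x - 1) = ws ! (y - 1)" using ee' wsin xy by simp
        moreover have "x - 1 < length ws" "y - 1 < length ws" using len xy by auto
        ultimately have "x - 1 = y - 1" using nth_eq_iff_index_eq[OF setws(2), of "x - 1" "y - 1"] by simp
        moreover have "1 \<le> x" "1 \<le> y" using xy(1,2) by auto
        ultimately show "x = y" by linarith
      qed
      moreover have "\<Psi> ws ` {1..k} \<subseteq> {1..k}" using e'in wsin by (auto simp: \<Psi>_def)
      ultimately show "bij_betw (\<Psi> ws) {1..k} {1..k}"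
        by (simp add: bij_betw_def endo_inj_surj)
    qed (auto simp: \<Psi>_def)
  qed (simp add: \<Phi>_def)
  then show ?thesis by (simp add: \<Phi>_def e_def)
qed


lemma X0: "linorder.insort_key ((\<le>)::nat\<Rightarrow>nat\<Rightarrow>bool) = insort_key"
proof (intro ext)
  fix f :: "'a \<Rightarrow> nat" and x xs
  show "linorder.insort_key (\<le>) f x xs = insort_key f x xs"
    by (induction xs) (simp_all add: linorder.insort_key.simps[OF linorder_class.linorder_axioms])
qed

lemma X: "linorder.sorted_key_list_of_set ((\<le>)::nat\<Rightarrow>nat\<Rightarrow>bool) = sorted_key_list_of_set"
  by (rule ext)+ (simp add: X0 sorted_key_list_of_set_def linorder.sorted_key_list_of_set_def[OF linorder_class.linorder_axioms])

context prel begin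

lemma block_W:
  assumes fin: "finite C" and lt: "\<forall>c\<in>C. c < m"
  shows "block_elt R f (insert m C) = W f C (f m)"
proof -
  define cs where "cs = sorted_list_of_set C"
  define k where "k = card C"
  have cs: "sorted cs" "distinct cs" "set cs = C" "length cs = k"
    using fin by (simp_all add: cs_def k_def)
  have mC: "m \<notin> C" using lt by auto
  have ps: "sorted_list_of_set (insert m C) = cs @ [m]"
  proof -
    have "sorted (cs @ [m])" using cs lt by (simp add: sorted_append less_imp_le)
    moreover have "distinct (cs @ [m])" using cs mC by simp
    ultimately have "sorted_list_of_set (set (cs @ [m])) = cs @ [m]"
      using sorted_list_of_set.idem_if_sorted_distinct[of "cs @ [m]"] by blast
    then show ?thesis using cs by simp
  qed
  have "block_elt R f (insert m C) =
     (\<Sum>\<sigma>\<in>{\<sigma>. \<sigma> permutes {1..k}}. foldr (\<lambda>i acc. R (f ((cs @ [m]) ! (\<sigma> i - 1))) acc) [1..<k+1] (f m))"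
    unfolding block_elt_def Let_def ps using cs by (simp add: nth_append del: upt_Suc)
  also have "\<dots> = (\<Sum>\<sigma>\<in>{\<sigma>. \<sigma> permutes {1..k}}. foldr (\<lambda>c acc. R (f c) acc) (map (\<lambda>i. cs ! (\<sigma> i - 1)) [1..<k+1]) (f m))"
  proof (rule sum.cong[OF refl])
    fix \<sigma> assume "\<sigma> \<in> {\<sigma>. \<sigma> permutes {1..k}}"
    then have p: "\<sigma> permutes {1..k}" by simp
    have "foldr (\<lambda>i acc. R (f ((cs @ [m]) ! (\<sigma> i - 1))) acc) [1..<k+1] (f m) =
          foldr (\<lambda>i acc. R (f (cs ! (\<sigma> i - 1))) acc) [1..<k+1] (f m)"
    proof (rule foldr_cong[OF refl refl])
      fix i a assume "i \<in> set [1..<k+1]"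
      then have "\<sigma> i \<in> {1..k}" using permutes_in_image[OF p] by (simp del: upt_Suc)
      then show "R (f ((cs @ [m]) ! (\<sigma> i - 1))) a = R (f (cs ! (\<sigma> i - 1))) a"
        using cs by (subgoal_tac "\<sigma> i - 1 < length cs") (auto simp: nth_append)
    qed
    then show "foldr (\<lambda>i acc. R (f ((cs @ [m]) ! (\<sigma> i - 1))) acc) [1..<k+1] (f m) =
       foldr (\<lambda>c acc. R (f c) acc) (map (\<lambda>i. cs ! (\<sigma> i - 1)) [1..<k+1]) (f m)"
      by (simp add: foldr_map o_def del: upt_Suc)
  qed
  also have "\<dots> = W f C (f m)"
    unfolding W_def using perm_sum[OF cs(2) cs(4), of "\<lambda>ws. foldr (\<lambda>c acc. R (f c) acc) ws (f m)"] cs(3)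
    by (simp del: upt_Suc)
  finally show ?thesis .
qed


lemma pt_insert:
  fixes B :: "nat set"
  assumes fin: "finite \<pi>'" and blocks: "\<forall>P\<in>\<pi>'. finite P \<and> P \<noteq> {}"
    and disj: "disjoint (insert B \<pi>')" and fB: "finite B" "B \<noteq> {}" and Bn: "B \<notin> \<pi>'"
    and lt: "\<forall>P\<in>\<pi>'. Max P < Max B"
  shows "partition_term R l f (insert B \<pi>') = R (partition_term R l f \<pi>') (block_elt R f B)"
proof -
  have inj: "inj_on Max (insert B \<pi>')"
  proof (rule inj_onI)
    fix P Q assume PQ: "P \<in> insert B \<pi>'" "Q \<in> insert B \<pi>'" "Max P = Max Q"
    have fP: "finite P \<and> P \<noteq> {}" if "P \<in> insert B \<pi>'" for P
      using that blocks fB by (cases "P = B") simp_all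
    have "Max P \<in> P" "Max Q \<in> Q" using fP[OF PQ(1)] fP[OF PQ(2)] Max_in by blast+
    then have "P \<inter> Q \<noteq> {}" using PQ(3) by auto
    then show "P = Q" using PQ(1,2) disj unfolding disjoint_def by blast
  qed
  interpret I: folding_insort_key "(\<le>) :: nat \<Rightarrow> nat \<Rightarrow> bool" "(<)" "insert B \<pi>'" Max
    by unfold_locales (rule inj)
  define L where "L = sorted_key_list_of_set Max \<pi>'"
  have L: "sorted_wrt (<) (map Max L)" "set L = \<pi>'" "length L = card \<pi>'"
    using I.strict_sorted_key_list_of_set[of \<pi>'] I.set_sorted_key_list_of_set[of \<pi>']
      I.length_sorted_key_list_of_set[of \<pi>'] fin unfolding L_def X by auto
  have "sorted_wrt (<) (map Max (L @ [B])) \<and> set (L @ [B]) = insert B \<pi>' \<and> length (L @ [B]) = card (insert B \<pi>')"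
    using L lt fin Bn by (simp add: sorted_wrt_append)
  then have "sorted_key_list_of_set Max (insert B \<pi>') = L @ [B]"
    using I.sorted_key_list_of_set_unique[of "insert B \<pi>'" "L @ [B]"] fin unfolding X by simp
  then show ?thesis by (simp add: partition_term_def L_def)
qed


lemma card_partition_le:
  fixes A :: "nat set"
  assumes "finite A" "partition_on A \<pi>"
  shows "card \<pi> \<le> card A"
proof -
  have fP: "finite P \<and> P \<noteq> {}" if "P \<in> \<pi>" for P
    using assms that partition_onD1[OF assms(2)] partition_onD3[OF assms(2)]
    by (metis Union_upper finite_subset)
  have inj: "inj_on Max \<pi>"
  proof (rule inj_onI)
    fix P Q assume PQ: "P \<in> \<pi>" "Q \<in> \<pi>" "Max P = Max Q"
    have "Max P \<in> P" "Max Q \<in> Q" using fP[OF PQ(1)] fP[OF PQ(2)] Max_in by blast+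
    then have "P \<inter> Q \<noteq> {}" using PQ(3) by auto
    then show "P = Q" using PQ(1,2) partition_onD2[OF assms(2)] unfolding disjoint_def by blast
  qed
  have "Max ` \<pi> \<subseteq> A"
  proof
    fix x assume "x \<in> Max ` \<pi>"
    then obtain P where "P \<in> \<pi>" "x = Max P" by auto
    moreover have "Max P \<in> P" using fP[OF \<open>P \<in> \<pi>\<close>] Max_in by blast
    ultimately show "x \<in> A" using partition_onD1[OF assms(2)] by auto
  qed
  then have "card (Max ` \<pi>) \<le> card A" using assms(1) by (simp add: card_mono)
  then show ?thesis using card_image[OF inj] by simp
qed

lemma blk_the:
  assumes "partition_on S \<pi>" "B \<in> \<pi>" "m \<in> B"
  shows "(THE B. B \<in> \<pi> \<and> m \<in> B) = B"
proof (rule the_equality)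
  show "B \<in> \<pi> \<and> m \<in> B" using assms by simp
  fix B' assume "B' \<in> \<pi> \<and> m \<in> B'"
  then show "B' = B" using assms partition_onD2[OF assms(1)] unfolding disjoint_def by blast
qed

lemma sorted_Max_split:
  fixes S :: "nat set"
  assumes "finite S" "S \<noteq> {}"
  shows "sorted_list_of_set S = sorted_list_of_set (S - {Max S}) @ [Max S]"
proof -
  let ?m = "Max S"
  let ?cs = "sorted_list_of_set (S - {?m})"
  have lt: "\<forall>c\<in>S - {?m}. c < ?m"
  proof
    fix c assume "c \<in> S - {?m}"
    then have "c \<le> ?m" "c \<noteq> ?m" using assms(1) Max_ge[of S c] by auto
    then show "c < ?m" by simp
  qed
  have "sorted (?cs @ [?m])" using lt assms by (simp add: sorted_append less_imp_le)
  moreover have "distinct (?cs @ [?m])" using assms by simp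
  ultimately have "sorted_list_of_set (set (?cs @ [?m])) = ?cs @ [?m]"
    using sorted_list_of_set.idem_if_sorted_distinct[of "?cs @ [?m]"] by blast
  moreover have "set (?cs @ [?m]) = S" using assms Max_in by auto
  ultimately show ?thesis by metis
qed

lemma pt_empty: "partition_term R l f {} = l"
proof -
  interpret I: folding_insort_key "(\<le>) :: nat \<Rightarrow> nat \<Rightarrow> bool" "(<)" "{}" "Max :: nat set \<Rightarrow> nat"
    by unfold_locales simp
  show ?thesis using I.sorted_key_list_of_set_empty unfolding X partition_term_def by simp
qed

lemma main:
  assumes "finite S"
  shows "brS l f S = (\<Sum>\<pi>\<in>{\<pi>. partition_on S \<pi>}. sg (card S - card \<pi>) (partition_term R l f \<pi>))"
  using assms
proof (induction "card S" arbitrary: S rule: less_induct)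
  case less
  show ?case
  proof (cases "S = {}")
    case True
    then have "{\<pi>. partition_on S \<pi>} = {{}}" by (auto simp: partition_on_empty)
    then show ?thesis using True by (simp add: brS_def pt_empty)
  next
    case False
    define m where "m = Max S"
    define S' where "S' = S - {m}"
    have mS: "m \<in> S" using False less.prems by (simp add: m_def)
    have fS': "finite S'" using less.prems by (simp add: S'_def)
    have lt: "\<forall>c\<in>S'. c < m" using less.prems by (auto simp: S'_def m_def le_neq_implies_less)
    have mS': "m \<notin> S'" by (simp add: S'_def)
    have cardS: "card S = Suc (card S')" unfolding S'_def by (rule card_Suc_Diff1[symmetric, OF less.prems mS])
    define PS where "PS A = {\<pi>. partition_on A \<pi>}" for A :: "nat set"
    define h where "h C \<pi>' = insert (insert m C) \<pi>'" for C \<pi>'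
    define g where "g \<pi> = sg (card S - card \<pi>) (partition_term R l f \<pi>)" for \<pi>
    have part: "partition_on S (h C \<pi>')" "insert m C \<notin> \<pi>'" "\<forall>P\<in>\<pi>'. P \<subseteq> S' - C"
      if "C \<subseteq> S'" "\<pi>' \<in> PS (S' - C)" for C \<pi>'
    proof -
      have p': "partition_on (S' - C) \<pi>'" using that by (simp add: PS_def)
      have U: "\<Union>\<pi>' = S' - C" using partition_onD1[OF p'] by simp
      show "\<forall>P\<in>\<pi>'. P \<subseteq> S' - C" using U by auto
      have dj: "disjnt (insert m C) (\<Union>\<pi>')" using U mS' by (auto simp: disjnt_def)
      have "S - insert m C = S' - C" by (auto simp: S'_def)
      moreover have "insert m C \<subseteq> S" using that mS by (auto simp: S'_def)
      ultimately show "partition_on S (h C \<pi>')" unfolding h_def using partition_on_insert[OF dj, of S] p' by simp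
      show "insert m C \<notin> \<pi>'" using U mS' by auto
    qed
    have termw: "sg (card C) (R (\<Sum>\<pi>'\<in>PS (S' - C). sg (card (S' - C) - card \<pi>') (partition_term R l f \<pi>')) (W f C (f m)))
        = (\<Sum>\<pi>'\<in>PS (S' - C). g (h C \<pi>'))" if C: "C \<subseteq> S'" for C
    proof -
      have "sg (card C) (R (\<Sum>\<pi>'\<in>PS (S' - C). sg (card (S' - C) - card \<pi>') (partition_term R l f \<pi>')) (W f C (f m)))
          = (\<Sum>\<pi>'\<in>PS (S' - C). sg (card C + (card (S' - C) - card \<pi>')) (R (partition_term R l f \<pi>') (W f C (f m))))"
        by (simp add: RsumL R_sgL sg_sum sg_add)
      also have "\<dots> = (\<Sum>\<pi>'\<in>PS (S' - C). g (h C \<pi>'))"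
      proof (rule sum.cong[OF refl])
        fix \<pi>' assume pi': "\<pi>' \<in> PS (S' - C)"
        have p': "partition_on (S' - C) \<pi>'" using pi' by (simp add: PS_def)
        note pt = part[OF C pi']
        have fC: "finite C" using C fS' finite_subset by blast
        have finpi: "finite \<pi>'" using finite_elements[OF _ p'] fS' by simp
        have blocks: "\<forall>P\<in>\<pi>'. finite P \<and> P \<noteq> {}"
          using pt(3) partition_onD3[OF p'] fS' by (metis finite_Diff finite_subset)
        have MaxB: "Max (insert m C) = m"
        proof (rule Max_eqI)
          fix y assume "y \<in> insert m C"
          then show "y \<le> m" using lt C by (auto intro: less_imp_le)
        qed (use fC in auto)
        have ltP: "\<forall>P\<in>\<pi>'. Max P < Max (insert m C)"
          using blocks pt(3) lt MaxB by (metis Diff_subset Max_in subset_iff)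
        have PT: "partition_term R l f (h C \<pi>') = R (partition_term R l f \<pi>') (W f C (f m))"
        proof -
          have "\<forall>c\<in>C. c < m" using lt C by auto
          then have bw: "block_elt R f (insert m C) = W f C (f m)" by (rule block_W[OF fC])
          show ?thesis
            using pt_insert[OF finpi blocks partition_onD2[OF pt(1)[unfolded h_def]] _ _ pt(2) ltP] fC bw
            by (simp add: h_def)
        qed
        have c1: "card (h C \<pi>') = Suc (card \<pi>')" using pt(2) finpi by (simp add: h_def)
        have c2: "card S' = card C + card (S' - C)" using C fS' fC by (simp add: card_Diff_subset card_mono)
        have c3: "card \<pi>' \<le> card (S' - C)" using card_partition_le[OF _ p'] fS' by simp
        have "card S - card (h C \<pi>') = card C + (card (S' - C) - card \<pi>')"
          using c1 c2 c3 cardS by simp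
        then show "sg (card C + (card (S' - C) - card \<pi>')) (R (partition_term R l f \<pi>') (W f C (f m))) = g (h C \<pi>')"
          by (simp add: g_def PT)
      qed
      finally show ?thesis .
    qed
    have "brS l f S = br l (map f (sorted_list_of_set S') @ [f m])"
      unfolding brS_def S'_def m_def using sorted_Max_split[OF less.prems False] by simp
    also have "\<dots> = (\<Sum>C\<in>Pow S'. sg (card C) (R (brS l f (S' - C)) (W f C (f m))))"
      by (rule G[OF fS'])
    also have "\<dots> = (\<Sum>C\<in>Pow S'. sg (card C) (R (\<Sum>\<pi>'\<in>PS (S' - C). sg (card (S' - C) - card \<pi>') (partition_term R l f \<pi>')) (W f C (f m))))"
    proof (rule sum.cong[OF refl])
      fix C assume "C \<in> Pow S'"
      have "card (S' - C) < card S" using cardS fS' by (metis card_Diff_subset_Int Diff_subset card_mono le_imp_less_Suc)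
      then have "brS l f (S' - C) = (\<Sum>\<pi>'\<in>PS (S' - C). sg (card (S' - C) - card \<pi>') (partition_term R l f \<pi>'))"
        unfolding PS_def using less.hyps fS' by simp
      then show "sg (card C) (R (brS l f (S' - C)) (W f C (f m))) = sg (card C) (R (\<Sum>\<pi>'\<in>PS (S' - C). sg (card (S' - C) - card \<pi>') (partition_term R l f \<pi>')) (W f C (f m)))"
        by simp
    qed
    also have "\<dots> = (\<Sum>C\<in>Pow S'. \<Sum>\<pi>'\<in>PS (S' - C). g (h C \<pi>'))"
      by (rule sum.cong[OF refl]) (simp add: termw)
    also have "\<dots> = (\<Sum>(C, \<pi>')\<in>Sigma (Pow S') (\<lambda>C. PS (S' - C)). g (h C \<pi>'))"
      by (rule sum.Sigma) (use fS' in \<open>auto simp: PS_def finitely_many_partition_on\<close>)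
    also have "\<dots> = (\<Sum>\<pi>\<in>PS S. g \<pi>)"
    proof (rule sum.reindex_bij_witness[where j="\<lambda>(C, \<pi>'). h C \<pi>'"
          and i="\<lambda>\<pi>. ((THE B. B \<in> \<pi> \<and> m \<in> B) - {m}, \<pi> - {THE B. B \<in> \<pi> \<and> m \<in> B})"])
      fix a assume a: "a \<in> Sigma (Pow S') (\<lambda>C. PS (S' - C))"
      obtain C \<pi>' where a': "a = (C, \<pi>')" by (cases a)
      have C: "C \<subseteq> S'" and pi': "\<pi>' \<in> PS (S' - C)" using a a' by auto
      note pt = part[OF C pi']
      have the: "(THE B. B \<in> h C \<pi>' \<and> m \<in> B) = insert m C"
        by (rule blk_the[OF pt(1)]) (auto simp: h_def)
      have "insert m C - {m} = C" using C mS' by auto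
      moreover have "h C \<pi>' - {insert m C} = \<pi>'" using pt(2) by (auto simp: h_def)
      ultimately show "(\<lambda>\<pi>. ((THE B. B \<in> \<pi> \<and> m \<in> B) - {m}, \<pi> - {THE B. B \<in> \<pi> \<and> m \<in> B})) ((\<lambda>(C, \<pi>'). h C \<pi>') a) = a"
        using a' the by simp
      show "(\<lambda>(C, \<pi>'). h C \<pi>') a \<in> PS S" using pt(1) a' by (simp add: PS_def)
      show "g ((\<lambda>(C, \<pi>'). h C \<pi>') a) = (case a of (C, \<pi>') \<Rightarrow> g (h C \<pi>'))" using a' by simp
    next
      fix \<pi> assume pi: "\<pi> \<in> PS S"
      then have p: "partition_on S \<pi>" by (simp add: PS_def)
      obtain B where B: "B \<in> \<pi>" "m \<in> B" using partition_onD1[OF p] mS by auto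
      have the: "(THE B. B \<in> \<pi> \<and> m \<in> B) = B" by (rule blk_the[OF p B])
      have BS: "B \<subseteq> S" using partition_onD1[OF p] B by auto
      have ins: "insert m (B - {m}) = B" using B by auto
      show "(\<lambda>(C, \<pi>'). h C \<pi>') ((\<lambda>\<pi>. ((THE B. B \<in> \<pi> \<and> m \<in> B) - {m}, \<pi> - {THE B. B \<in> \<pi> \<and> m \<in> B})) \<pi>) = \<pi>"
        using the ins B by (auto simp: h_def)
      have "disjnt B (\<Union>(\<pi> - {B}))"
        using partition_onD2[OF p] B(1) unfolding disjoint_def disjnt_def by blast
      moreover have "\<pi> = insert B (\<pi> - {B})" using B by auto
      ultimately have "partition_on (S - B) (\<pi> - {B})"
        using partition_on_insert[of B "\<pi> - {B}" S] p by simp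
      moreover have "S - B = S' - (B - {m})" using B by (auto simp: S'_def)
      moreover have "B - {m} \<subseteq> S'" using BS by (auto simp: S'_def)
      ultimately show "(\<lambda>\<pi>. ((THE B. B \<in> \<pi> \<and> m \<in> B) - {m}, \<pi> - {THE B. B \<in> \<pi> \<and> m \<in> B})) \<pi> \<in> Sigma (Pow S') (\<lambda>C. PS (S' - C))"
        using the by (simp add: PS_def)
    qed
    finally show ?thesis by (simp add: PS_def g_def)
  qed
qed


lemma final: "sbrace R l f n = (\<Sum>\<pi>\<in>{\<pi>. partition_on {1..n} \<pi>}. sg (n - card \<pi>) (partition_term R l f \<pi>))"
proof -
  have "sorted_list_of_set {1..n} = [1..<n+1]"
    by (metis atLeastLessThanSuc_atLeastAtMost sorted_list_of_set_range Suc_eq_plus1)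
  then have "brS l f {1..n} = br l (map f [1..<n+1])" by (simp add: brS_def)
  also have "\<dots> = sbrace R l (\<lambda>i. map f [1..<n+1] ! (i - 1)) n" by (simp add: br_def del: upt_Suc)
  also have "\<dots> = sbrace R l f n" by (rule sbrace_cong) (auto simp del: upt_Suc)
  finally show ?thesis using main[of "{1..n}" l f] by simp
qed

end

theorem corollary2p2:
  fixes scale :: "'k::field_char_0 \<Rightarrow> 'v::ab_group_add \<Rightarrow> 'v"
    and rp :: "'v \<Rightarrow> 'v \<Rightarrow> 'v"
    and l :: 'v and f :: "nat \<Rightarrow> 'v" and n :: nat
  assumes "right_pre_Lie scale rp"
  shows "sbrace rp l f n =
    (\<Sum>\<P> \<in> {\<P>. partition_on {1..n} \<P>}.
       scale ((-1) ^ (n - card \<P>)) (partition_term rp l f \<P>))"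
proof -
  have vs: "vector_space scale" using assms by (simp add: right_pre_Lie_def)
  interpret V: vector_space scale by (rule vs)
  interpret P: prel rp
    using assms unfolding right_pre_Lie_def by unfold_locales auto
  have sc: "scale ((-1) ^ k) x = P.sg k x" for k x
  proof (cases "even k")
    case True then show ?thesis by (simp add: P.sg_def V.scale_one)
  next
    case False then show ?thesis
      by (simp add: P.sg_def V.scale_one V.scale_minus_left)
  qed
  show ?thesis unfolding sc by (rule P.final)
qed

end
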